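(* Let $N\ge2$, $M\geq0$, and let $U$ be the vector space with orthonormal basis $e_0,\dots,e_M$. For $n\ge1$ let $\alpha_n$ act on $U$ by $\alpha_ne_k=e_{k-n}$ if $k-n\geq0$ and $0$ otherwise, and let $\alpha_{-n}=\alpha_n^*$ (so $\alpha_{-n}e_k=e_{k+n}$ if $k+n\le M$, else $0$). Let $\mathfrak{W}=\exp\big(\sum_{n<0,N\nmid n}\alpha_n/n\big)\exp\big(\sum_{n>0,N\nmid n}\alpha_n/n\big)$ acting on $U$. Then for all $0\le k,l\le M$, $\langle e_k\,|\,\mathfrak{W}\,|\,e_l\rangle$ equals the coefficient of $x^ky^l$ in $$f(x,y)=\frac{1}{1-xy}\cdot\frac{1-x}{(1-x^N)^{1/N}}\cdot\frac{(1-y^N)^{1/N}}{1-y}.$$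
   Context: Power series are expanded at $x=y=0$ using the binomial series for $(1-x^N)^{\mp1/N}$. *)

theory Defs
  imports "Jordan_Normal_Form.Matrix" "HOL-Computational_Algebra.Formal_Power_Series"
    "HOL-Analysis.Infinite_Sum"
begin

text \<open>Operators on U = span(e_0,...,e_M) are represented by real (M+1)x(M+1) matrices
  w.r.t. the orthonormal basis; column j is the image of e_j, so the matrix element
  <e_k | A | e_l> is A $$ (k,l).\<close>

definition alpha_pos :: "nat \<Rightarrow> nat \<Rightarrow> real mat" where
  "alpha_pos M n = mat (Suc M) (Suc M) (\<lambda>(i, j). if n \<le> j \<and> i = j - n then 1 else 0)"

text \<open>alpha_n for n > 0, and alpha_(-n) = adjoint of alpha_n (= transpose, real orthonormal basis).\<close>
definition alpha :: "nat \<Rightarrow> int \<Rightarrow> real mat" where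
  "alpha M n = (if n > 0 then alpha_pos M (nat n) else transpose_mat (alpha_pos M (nat (- n))))"

text \<open>The operator sum over n in S of alpha_n / n (entrywise an unconditional sum;
  only finitely many terms are nonzero).\<close>
definition alpha_sum :: "nat \<Rightarrow> int set \<Rightarrow> real mat" where
  "alpha_sum M S = mat (Suc M) (Suc M) (\<lambda>(i, j). \<Sum>\<^sub>\<infinity>n\<in>S. (alpha M n $$ (i, j)) / real_of_int n)"

definition mat_exp :: "real mat \<Rightarrow> real mat" where
  "mat_exp A = mat (dim_row A) (dim_col A) (\<lambda>(i, j). \<Sum>m. (A ^\<^sub>m m) $$ (i, j) / fact m)"

definition W_op :: "nat \<Rightarrow> nat \<Rightarrow> real mat" where
  "W_op M N = mat_exp (alpha_sum M {n. n < 0 \<and> \<not> int N dvd n})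
             * mat_exp (alpha_sum M {n. n > 0 \<and> \<not> int N dvd n})"

definition one_minus_pow_powr :: "nat \<Rightarrow> real \<Rightarrow> real fps" where
  "one_minus_pow_powr N a = fps_compose (fps_binomial a) (- (fps_X ^ N))"

text \<open>Bivariate power series in x,y as real fps fps: the outer variable is x, the inner is y;
  the coefficient of x^k y^l in F is F $ k $ l.\<close>
definition lift_x :: "real fps \<Rightarrow> real fps fps" where
  "lift_x g = Abs_fps (\<lambda>k. fps_const (fps_nth g k))"

definition lift_y :: "real fps \<Rightarrow> real fps fps" where
  "lift_y h = fps_const h"

definition var_x :: "real fps fps" where "var_x = fps_X"
definition var_y :: "real fps fps" where "var_y = fps_const fps_X"

definition f_gen :: "nat \<Rightarrow> real fps fps" where
  "f_gen N = inverse (1 - var_x * var_y)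
     * lift_x ((1 - fps_X) * one_minus_pow_powr N (- 1 / real N))
     * lift_y (one_minus_pow_powr N (1 / real N) * inverse (1 - fps_X))"

end

theory Submission
  imports Defs
begin

definition Up :: "nat \<Rightarrow> real fps \<Rightarrow> real mat" where
  "Up n a = mat n n (\<lambda>(i,j). if i \<le> j then fps_nth a (j-i) else 0)"
definition Lo :: "nat \<Rightarrow> real fps \<Rightarrow> real mat" where
  "Lo n a = mat n n (\<lambda>(i,j). if j \<le> i then fps_nth a (i-j) else 0)"

lemma Up_dims[simp]: "dim_row (Up n a) = n" "dim_col (Up n a) = n" "Up n a \<in> carrier_mat n n"
  by (auto simp: Up_def)
lemma Lo_dims[simp]: "dim_row (Lo n a) = n" "dim_col (Lo n a) = n" "Lo n a \<in> carrier_mat n n"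
  by (auto simp: Lo_def)

lemma Up_idx: "i < n \<Longrightarrow> j < n \<Longrightarrow> Up n a $$ (i,j) = (if i \<le> j then fps_nth a (j-i) else 0)"
  by (simp add: Up_def)
lemma Lo_idx: "i < n \<Longrightarrow> j < n \<Longrightarrow> Lo n a $$ (i,j) = (if j \<le> i then fps_nth a (i-j) else 0)"
  by (simp add: Lo_def)

lemma Lo_transpose: "Lo n a = transpose_mat (Up n a)"
  by (rule eq_matI) (auto simp: Lo_idx Up_idx)

lemma conv_sum:
  fixes a b :: "real fps"
  assumes "i \<le> j" "j < n"
  shows "(\<Sum>p\<in>{0..<n}. (if i \<le> p then fps_nth a (p-i) else 0) * (if p \<le> j then fps_nth b (j-p) else 0))
       = fps_nth (a*b) (j-i)"
proof -
  have "(\<Sum>p\<in>{0..<n}. (if i \<le> p then fps_nth a (p-i) else 0) * (if p \<le> j then fps_nth b (j-p) else 0))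
      = (\<Sum>p\<in>{i..j}. fps_nth a (p-i) * fps_nth b (j-p))"
    using assms by (intro sum.mono_neutral_cong_right) auto
  also have "\<dots> = (\<Sum>q\<in>{0..j-i}. fps_nth a q * fps_nth b (j-i-q))"
    using assms
    by (intro sum.reindex_bij_witness[of _ "\<lambda>q. q + i" "\<lambda>p. p - i"]) auto
  also have "\<dots> = fps_nth (a*b) (j-i)" by (simp add: fps_mult_nth)
  finally show ?thesis .
qed

lemma Up_mult: "Up n a * Up n b = Up n (a*b)"
proof (rule eq_matI)
  fix i j assume ij: "i < dim_row (Up n (a*b))" "j < dim_col (Up n (a*b))"
  hence ij': "i < n" "j < n" by auto
  have "(Up n a * Up n b) $$ (i,j) = (\<Sum>p\<in>{0..<n}. Up n a $$ (i,p) * Up n b $$ (p,j))"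
    using ij' by (simp add: scalar_prod_def)
  also have "\<dots> = (\<Sum>p\<in>{0..<n}. (if i \<le> p then fps_nth a (p-i) else 0) * (if p \<le> j then fps_nth b (j-p) else 0))"
    using ij' by (intro sum.cong) (auto simp: Up_idx)
  also have "\<dots> = Up n (a*b) $$ (i,j)"
  proof (cases "i \<le> j")
    case True thus ?thesis using conv_sum[OF True ij'(2)] ij' by (simp add: Up_idx)
  next
    case False
    hence "(\<Sum>p\<in>{0..<n}. (if i \<le> p then fps_nth a (p-i) else 0) * (if p \<le> j then fps_nth b (j-p) else 0)) = 0"
      by (intro sum.neutral) auto
    thus ?thesis using False ij' by (simp add: Up_idx)
  qed
  finally show "(Up n a * Up n b) $$ (i,j) = Up n (a*b) $$ (i,j)" .
qed auto

lemma Lo_mult: "Lo n a * Lo n b = Lo n (a*b)"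
proof -
  have "Lo n a * Lo n b = transpose_mat (Up n b * Up n a)"
    using transpose_mult[of "Up n b" n n "Up n a" n] by (simp add: Lo_transpose)
  thus ?thesis by (simp add: Up_mult Lo_transpose mult.commute)
qed

lemma Up_one: "Up n 1 = 1\<^sub>m n"
  by (rule eq_matI) (auto simp: Up_idx)
lemma Lo_one: "Lo n 1 = 1\<^sub>m n"
  by (rule eq_matI) (auto simp: Lo_idx)

lemma Up_pow: "Up n a ^\<^sub>m m = Up n (a^m)"
  by (induct m) (auto simp: Up_one Up_mult mult.commute)
lemma Lo_pow: "Lo n a ^\<^sub>m m = Lo n (a^m)"
  by (induct m) (auto simp: Lo_one Lo_mult mult.commute)

lemma exp_coeff:
  fixes a :: "real fps"
  assumes "fps_nth a 0 = 0"
  shows "(\<Sum>m. fps_nth (a^m) d / fact m) = fps_nth (fps_exp 1 oo a) d"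
proof -
  have "(\<Sum>m. fps_nth (a^m) d / fact m) = (\<Sum>m\<in>{0..d}. fps_nth (a^m) d / fact m)"
    using startsby_zero_power_prefix[OF assms] by (intro suminf_finite) auto
  also have "\<dots> = fps_nth (fps_exp 1 oo a) d"
    by (simp add: fps_compose_nth)
  finally show ?thesis .
qed

lemma mat_exp_Up: assumes "fps_nth a 0 = 0" shows "mat_exp (Up n a) = Up n (fps_exp 1 oo a)"
  unfolding mat_exp_def
  by (rule eq_matI) (auto simp: Up_pow Up_idx exp_coeff[OF assms])

lemma mat_exp_Lo: assumes "fps_nth a 0 = 0" shows "mat_exp (Lo n a) = Lo n (fps_exp 1 oo a)"
  unfolding mat_exp_def
  by (rule eq_matI) (auto simp: Lo_pow Lo_idx exp_coeff[OF assms])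

definition aN :: "nat \<Rightarrow> real fps" where
  "aN N = Abs_fps (\<lambda>d. if 0 < d \<and> \<not> int N dvd int d then 1 / real d else 0)"

lemma alpha_pos_idx: "i < Suc M \<Longrightarrow> j < Suc M \<Longrightarrow>
   alpha_pos M m $$ (i,j) = (if m \<le> j \<and> i = j - m then 1 else 0)"
  by (simp add: alpha_pos_def)

lemma alpha_sum_pos:
  "alpha_sum M {n. n > 0 \<and> \<not> int N dvd n} = Up (Suc M) (aN N)"
proof (rule eq_matI)
  fix i j assume "i < dim_row (Up (Suc M) (aN N))" "j < dim_col (Up (Suc M) (aN N))"
  hence ij: "i < Suc M" "j < Suc M" by auto
  define S where "S = {n::int. n > 0 \<and> \<not> int N dvd n}"
  define f where "f = (\<lambda>n. alpha M n $$ (i, j) / real_of_int n)"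
  define T where "T = S \<inter> {int j - int i}"
  have fz: "f n = 0" if "n \<in> S - T" for n
    using that ij by (auto simp: f_def T_def S_def alpha_def alpha_pos_idx)
  have "infsum f S = infsum f T"
    by (rule infsum_cong_neutral) (use fz in \<open>auto simp: T_def\<close>)
  also have "\<dots> = sum f T" by (simp add: T_def)
  also have "\<dots> = (if i \<le> j then fps_nth (aN N) (j-i) else 0)"
  proof (cases "i < j \<and> \<not> int N dvd (int j - int i)")
    case True
    hence "T = {int j - int i}" by (auto simp: T_def S_def)
    moreover have e: "int (j - i) = int j - int i" using True by auto
    moreover have "\<not> N dvd (j - i)" using True e by (metis int_dvd_int_iff)
    ultimately show ?thesis using True ij
      by (auto simp: f_def alpha_def alpha_pos_idx aN_def of_nat_diff)
  next
    case False
    hence "T = {}" by (auto simp: T_def S_def)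
    moreover have "\<not> (0 < j - i \<and> \<not> int N dvd int (j - i))" using False by (cases "i < j") (auto simp: of_nat_diff)
    ultimately show ?thesis by (auto simp: aN_def)
  qed
  finally show "alpha_sum M {n. n > 0 \<and> \<not> int N dvd n} $$ (i, j) = Up (Suc M) (aN N) $$ (i, j)"
    using ij by (simp add: alpha_sum_def Up_idx S_def f_def)
qed (auto simp: alpha_sum_def)

lemma alpha_sum_neg:
  "alpha_sum M {n. n < 0 \<and> \<not> int N dvd n} = Lo (Suc M) (- aN N)"
proof (rule eq_matI)
  fix i j assume "i < dim_row (Lo (Suc M) (- aN N))" "j < dim_col (Lo (Suc M) (- aN N))"
  hence ij: "i < Suc M" "j < Suc M" by auto
  define S where "S = {n::int. n < 0 \<and> \<not> int N dvd n}"
  define f where "f = (\<lambda>n. alpha M n $$ (i, j) / real_of_int n)"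
  define T where "T = S \<inter> {int j - int i}"
  have fz: "f n = 0" if "n \<in> S - T" for n
    using that ij by (auto simp: f_def T_def S_def alpha_def alpha_pos_idx alpha_pos_def)
  have "infsum f S = infsum f T"
    by (rule infsum_cong_neutral) (use fz in \<open>auto simp: T_def\<close>)
  also have "\<dots> = sum f T" by (simp add: T_def)
  also have "\<dots> = (if j \<le> i then fps_nth (- aN N) (i-j) else 0)"
  proof (cases "j < i \<and> \<not> int N dvd (int i - int j)")
    case True
    hence "T = {int j - int i}" by (auto simp: T_def S_def dvd_diff_commute)
    moreover have e: "int (i - j) = int i - int j" using True by auto
    moreover have "\<not> N dvd (i - j)" using True e by (metis int_dvd_int_iff)
    moreover have "1 / (real j - real i) = - (1 / (real i - real j))"
      by (metis divide_minus_right minus_diff_eq)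
    ultimately show ?thesis using True ij
      by (auto simp: f_def alpha_def alpha_pos_idx alpha_pos_def aN_def of_nat_diff)
  next
    case False
    hence "T = {}" by (auto simp: T_def S_def dvd_diff_commute)
    moreover have "\<not> (0 < i - j \<and> \<not> int N dvd int (i - j))" using False by (cases "j < i") (auto simp: of_nat_diff)
    ultimately show ?thesis by (auto simp: aN_def)
  qed
  finally show "alpha_sum M {n. n < 0 \<and> \<not> int N dvd n} $$ (i, j) = Lo (Suc M) (- aN N) $$ (i, j)"
    using ij by (simp add: alpha_sum_def Lo_idx S_def f_def)
qed (auto simp: alpha_sum_def)

lemma ode_unique:
  fixes F G P Q :: "real fps"
  assumes F: "fps_deriv F * P = F * Q" and G: "fps_deriv G * P = G * Q"
    and P0: "fps_nth P 0 \<noteq> 0" and FG0: "fps_nth F 0 = fps_nth G 0"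
  shows "F = G"
proof -
  define D where "D = F - G"
  define c where "c = Q * inverse P"
  have "fps_deriv D * P = D * Q" using F G by (simp add: D_def algebra_simps)
  hence "fps_deriv D * P * inverse P = D * Q * inverse P" by simp
  hence Dc: "fps_deriv D = D * c"
    using inverse_mult_eq_1'[OF P0] by (simp add: c_def mult.assoc)
  have "\<forall>m\<le>n. fps_nth D m = 0" for n
  proof (induct n)
    case 0 thus ?case using FG0 by (simp add: D_def)
  next
    case (Suc n)
    have "fps_nth (D * c) n = 0"
      unfolding fps_mult_nth using Suc by (intro sum.neutral) auto
    hence "of_nat (n+1) * fps_nth D (Suc n) = 0"
      using arg_cong[OF Dc, of "\<lambda>x. fps_nth x n"] by simp
    hence "fps_nth D (Suc n) = 0" by simp
    thus ?case using Suc le_Suc_eq by auto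
  qed
  hence "D = 0" by (auto simp: fps_eq_iff)
  thus ?thesis by (simp add: D_def)
qed

lemma deriv_aN: "fps_nth (fps_deriv (aN N)) m = (if N dvd (m+1) then 0 else 1)"
  by (simp add: aN_def del: of_nat_Suc)

lemma deriv_aN_mult:
  assumes N: "N \<ge> 1"
  shows "fps_deriv (aN N) * (1 - fps_X ^ N) = (\<Sum>i<N-1. fps_X ^ i)"
proof (rule fps_ext)
  fix m
  have "fps_nth (fps_deriv (aN N) * (1 - fps_X ^ N)) m
      = fps_nth (fps_deriv (aN N)) m - (if m < N then 0 else fps_nth (fps_deriv (aN N)) (m - N))"
    using fps_X_power_mult_nth[of N "fps_deriv (aN N)" m]
    by (simp add: algebra_simps mult.commute)
  also have "\<dots> = (if m < N - 1 then 1 else 0)"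
  proof (cases "m < N")
    case True
    have "N dvd (m+1) \<longleftrightarrow> m + 1 = N"
    proof
      assume "N dvd (m+1)"
      thus "m+1 = N" using True dvd_imp_le[of N "m+1"] by linarith
    qed auto
    thus ?thesis using True N by (auto simp: deriv_aN simp del: fps_deriv_nth)
  next
    case False
    have "m+1 = (m - N + 1) + N" using False by auto
    hence "N dvd (m+1) \<longleftrightarrow> N dvd (m - N + 1)"
      by (metis dvd_add_times_triv_right_iff mult_1)
    thus ?thesis using False by (auto simp: deriv_aN simp del: fps_deriv_nth)
  qed
  also have "\<dots> = fps_nth (\<Sum>i<N-1. fps_X ^ i :: real fps) m"
    by (simp add: fps_sum_nth)
  finally show "fps_nth (fps_deriv (aN N) * (1 - fps_X ^ N)) m = fps_nth (\<Sum>i<N-1. fps_X ^ i :: real fps) m" .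
qed

lemma deriv_aN_P:
  assumes N: "N \<ge> 1"
  shows "fps_deriv (aN N) * ((1 - fps_X) * (1 - fps_X ^ N)) = 1 - fps_X ^ (N-1)"
proof -
  have "fps_deriv (aN N) * ((1 - fps_X) * (1 - fps_X ^ N)) = (1 - fps_X) * (fps_deriv (aN N) * (1 - fps_X ^ N))"
    by (rule mult.left_commute)
  also have "\<dots> = (1 - fps_X) * (\<Sum>i<N-1. fps_X ^ i)"
    using deriv_aN_mult[OF N] by simp
  also have "\<dots> = 1 - fps_X ^ (N-1)" by (simp add: one_diff_power_eq)
  finally show ?thesis .
qed

lemma aN0: "fps_nth (aN N) 0 = 0" by (simp add: aN_def)

lemma binom_ode: "(1 + fps_X) * fps_deriv (fps_binomial c) = fps_const c * fps_binomial (c::real)"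
proof -
  have ne: "fps_nth (1 + fps_X :: real fps) 0 \<noteq> 0" by simp
  have "fps_deriv (fps_binomial c) = fps_const c * fps_binomial c * inverse (1 + fps_X)"
    using fps_binomial_deriv[of c] fps_divide_unit[OF ne] by simp
  hence "(1 + fps_X) * fps_deriv (fps_binomial c) = fps_const c * fps_binomial c * (inverse (1 + fps_X) * (1 + fps_X))"
    by (simp add: ac_simps)
  thus ?thesis using inverse_mult_eq_1[OF ne] by simp
qed

lemma ring4: "(a::'a::comm_ring_1) * b * (- (d * e)) = - (a * d) * e * b"
  by (simp add: algebra_simps)

lemma Bpow_deriv:
  assumes N: "N \<ge> 1"
  shows "(1 - fps_X^N) * fps_deriv (one_minus_pow_powr N c)
       = - (fps_const c * fps_const (of_nat N)) * fps_X^(N-1) * one_minus_pow_powr N c"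
proof -
  define u :: "real fps" where "u = - (fps_X ^ N)"
  have u0: "fps_nth u 0 = 0" using N by (simp add: u_def)
  have B: "one_minus_pow_powr N c = fps_binomial c oo u" by (simp add: one_minus_pow_powr_def u_def)
  have du: "fps_deriv u = - (fps_const (of_nat N) * fps_X^(N-1))"
    by (simp add: u_def fps_deriv_power)
  have one: "(1 + fps_X) oo u = 1 - fps_X^N"
  proof -
    have "(1 + fps_X) oo u = 1 + u" using u0 by (simp add: fps_compose_add_distrib)
    thus ?thesis by (simp add: u_def)
  qed
  have "(1 - fps_X^N) * (fps_deriv (fps_binomial c) oo u) = ((1 + fps_X) * fps_deriv (fps_binomial c)) oo u"
    using u0 by (simp add: fps_compose_mult_distrib one)
  also have "\<dots> = fps_const c * (fps_binomial c oo u)"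
    using u0 by (simp add: binom_ode fps_compose_mult_distrib)
  finally have e: "(1 - fps_X^N) * (fps_deriv (fps_binomial c) oo u) = fps_const c * (fps_binomial c oo u)" .
  have "(1 - fps_X^N) * fps_deriv (one_minus_pow_powr N c)
      = ((1 - fps_X^N) * (fps_deriv (fps_binomial c) oo u)) * fps_deriv u"
    using u0 by (simp add: B fps_compose_deriv mult.assoc)
  also have "\<dots> = fps_const c * (fps_binomial c oo u) * (- (fps_const (of_nat N) * fps_X^(N-1)))"
    by (simp add: e du)
  also have "\<dots> = - (fps_const c * fps_const (of_nat N)) * fps_X^(N-1) * one_minus_pow_powr N c"
    unfolding B by (rule ring4)
  finally show ?thesis .
qed

lemma ringE1:
  fixes D Bd G B x z :: "'a::comm_ring_1"
  assumes "D*(1-x) = Bd + G" "(1 - z*x)*Bd = -(z*B)" "B = G*(1-x)"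
  shows "D*((1-x)*(1-z*x)) = G*(1-z)"
proof -
  have "D*((1-x)*(1-z*x)) = (D*(1-x))*(1-z*x)" by (simp add: mult.assoc)
  also have "\<dots> = (Bd + G)*(1-z*x)" by (subst assms(1)) (rule refl)
  also have "\<dots> = (1-z*x)*Bd + G*(1-z*x)" by (simp add: algebra_simps)
  also have "\<dots> = -(z*(G*(1-x))) + G*(1-z*x)" using assms(2,3) by simp
  also have "\<dots> = G*(1-z)" by (simp add: algebra_simps)
  finally show ?thesis .
qed

lemma ringE2:
  fixes D Cd G C x z :: "'a::comm_ring_1"
  assumes "D = (1-x)*Cd - C" "(1 - z*x)*Cd = z*C" "G = (1-x)*C"
  shows "D*((1-x)*(1-z*x)) = G*(-(1-z))"
proof -
  have "D*((1-x)*(1-z*x)) = (1-x)*(1-x)*((1-z*x)*Cd) - C*(1-x)*(1-z*x)"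
    unfolding assms(1) by (simp add: algebra_simps)
  also have "\<dots> = (1-x)*(1-x)*(z*C) - C*(1-x)*(1-z*x)" using assms(2) by simp
  also have "\<dots> = G*(-(1-z))" unfolding assms(3) by (simp add: algebra_simps)
  finally show ?thesis .
qed

lemma B0[simp]: "fps_nth (one_minus_pow_powr N c) 0 = 1"
  by (simp add: one_minus_pow_powr_def)

lemma XN: "N \<ge> 1 \<Longrightarrow> (fps_X::real fps)^N = fps_X^(N-1) * fps_X"
  by (cases N) (auto simp: power_Suc2)

lemma E1:
  assumes N: "N \<ge> 1"
  shows "fps_exp 1 oo aN N = one_minus_pow_powr N (1 / real N) * inverse (1 - fps_X)"
proof (rule ode_unique[where P = "(1 - fps_X) * (1 - fps_X ^ N)" and Q = "1 - fps_X ^ (N-1)"])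
  show "fps_deriv (fps_exp 1 oo aN N) * ((1 - fps_X) * (1 - fps_X ^ N)) = (fps_exp 1 oo aN N) * (1 - fps_X ^ (N-1))"
    using deriv_aN_P[OF N] by (simp add: fps_compose_deriv aN0 mult.assoc)
next
  define B where "B = one_minus_pow_powr N (1 / real N)"
  define G where "G = B * inverse (1 - fps_X)"
  have ne: "fps_nth (1 - fps_X :: real fps) 0 \<noteq> 0" by simp
  have e3: "B = G * (1 - fps_X)" using inverse_mult_eq_1[OF ne] by (simp add: G_def mult.assoc)
  have e1: "fps_deriv G * (1 - fps_X) = fps_deriv B + G"
    using arg_cong[OF e3, of fps_deriv] by (simp add: algebra_simps)
  have c: "- (fps_const (1 / real N) * fps_const (real N)) = (-1 :: real fps)"
    using N by simp
  have e2: "(1 - fps_X^(N-1) * fps_X) * fps_deriv B = - (fps_X^(N-1) * B)"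
    using Bpow_deriv[OF N, of "1 / real N"] unfolding B_def[symmetric] c XN[OF N] by simp
  have "fps_deriv G * ((1 - fps_X) * (1 - fps_X^(N-1) * fps_X)) = G * (1 - fps_X^(N-1))"
    by (rule ringE1[OF e1 e2 e3])
  thus "fps_deriv G * ((1 - fps_X) * (1 - fps_X ^ N)) = G * (1 - fps_X ^ (N-1))"
    using XN[OF N] by simp
  show "fps_nth ((1 - fps_X) * (1 - fps_X ^ N) :: real fps) 0 \<noteq> 0" using N by simp
  show "fps_nth (fps_exp 1 oo aN N) 0 = fps_nth G 0" by (simp add: G_def B_def)
qed

lemma E2:
  assumes N: "N \<ge> 1"
  shows "fps_exp 1 oo (- aN N) = (1 - fps_X) * one_minus_pow_powr N (- 1 / real N)"
proof (rule ode_unique[where P = "(1 - fps_X) * (1 - fps_X ^ N)" and Q = "- (1 - fps_X ^ (N-1))"])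
  have dF: "fps_deriv (fps_exp 1 oo - aN N) = - ((fps_exp 1 oo - aN N) * fps_deriv (aN N))"
    by (simp add: fps_compose_deriv aN0)
  show "fps_deriv (fps_exp 1 oo - aN N) * ((1 - fps_X) * (1 - fps_X ^ N)) = (fps_exp 1 oo - aN N) * (- (1 - fps_X ^ (N-1)))"
    unfolding dF by (simp only: mult_minus_left mult_minus_right mult.assoc deriv_aN_P[OF N])
next
  define C where "C = one_minus_pow_powr N (- 1 / real N)"
  define G where "G = (1 - fps_X) * C"
  have e1: "fps_deriv G = (1 - fps_X) * fps_deriv C - C"
    by (simp add: G_def algebra_simps)
  have c: "- (fps_const (- 1 / real N) * fps_const (real N)) = (1 :: real fps)"
    using N by simp
  have e2: "(1 - fps_X^(N-1) * fps_X) * fps_deriv C = fps_X^(N-1) * C"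
    using Bpow_deriv[OF N, of "- 1 / real N"] unfolding C_def[symmetric] c XN[OF N] by simp
  have "fps_deriv G * ((1 - fps_X) * (1 - fps_X^(N-1) * fps_X)) = G * (- (1 - fps_X^(N-1)))"
    by (rule ringE2[OF e1 e2 G_def])
  thus "fps_deriv G * ((1 - fps_X) * (1 - fps_X ^ N)) = G * (- (1 - fps_X ^ (N-1)))"
    using XN[OF N] by simp
  show "fps_nth ((1 - fps_X) * (1 - fps_X ^ N) :: real fps) 0 \<noteq> 0" using N by simp
  show "fps_nth (fps_exp 1 oo - aN N) 0 = fps_nth G 0" by (simp add: G_def C_def)
qed

definition Ixy :: "real fps fps" where "Ixy = Abs_fps (\<lambda>k. fps_X ^ k)"

lemma Ixy_mult: "(1 - var_x * var_y) * Ixy = 1"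
proof (rule fps_ext)
  fix n
  have "fps_nth (var_x * var_y * Ixy) n = (if n = 0 then 0 else fps_X ^ n)"
    by (cases n) (auto simp: var_x_def var_y_def Ixy_def mult.assoc)
  thus "fps_nth ((1 - var_x * var_y) * Ixy) n = fps_nth 1 n"
    by (auto simp: algebra_simps Ixy_def)
qed

lemma inv_xy: "inverse (1 - var_x * var_y) = Ixy"
proof -
  have f0: "fps_nth (1 - var_x * var_y) 0 = 1" by (simp add: var_x_def var_y_def fps_X_nth)
  have "fps_nth Ixy 0 * fps_nth (1 - var_x * var_y) 0 = 1" unfolding f0 by (simp add: Ixy_def)
  from fps_lr_inverse_unique_ring1(2)[OF Ixy_mult this]
  have r: "fps_right_inverse (1 - var_x * var_y) (fps_nth Ixy 0) = Ixy" .
  have i0: "fps_nth Ixy 0 = 1" by (simp add: Ixy_def)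
  have "inverse (1 - var_x * var_y) = fps_right_inverse (1 - var_x * var_y) (inverse (fps_nth (1 - var_x * var_y) 0))"
    by (simp only: fps_inverse_def)
  also have "\<dots> = fps_right_inverse (1 - var_x * var_y) 1"
    by (simp only: f0 fps_inverse_one)
  finally show ?thesis using r i0 by simp
qed

lemma fgen_coeff:
  "fps_nth (fps_nth (f_gen N) k) l
   = (\<Sum>p\<in>{0..min k l}. fps_nth ((1 - fps_X) * one_minus_pow_powr N (- 1 / real N)) (k-p)
        * fps_nth (one_minus_pow_powr N (1 / real N) * inverse (1 - fps_X)) (l-p))"
proof -
  define g where "g = (1 - fps_X) * one_minus_pow_powr N (- 1 / real N)"
  define h where "h = one_minus_pow_powr N (1 / real N) * inverse (1 - fps_X)"
  have "fps_nth (f_gen N) k = fps_nth (Ixy * lift_x g) k * h"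
    by (simp add: f_gen_def inv_xy lift_y_def g_def h_def)
  also have "fps_nth (Ixy * lift_x g) k = (\<Sum>i=0..k. fps_X^i * fps_const (fps_nth g (k-i)))"
    by (simp add: fps_mult_nth Ixy_def lift_x_def)
  finally have "fps_nth (fps_nth (f_gen N) k) l = (\<Sum>i=0..k. fps_nth (fps_X^i * (fps_const (fps_nth g (k-i)) * h)) l)"
    by (simp add: sum_distrib_right fps_sum_nth mult.assoc)
  also have "\<dots> = (\<Sum>i=0..k. if l < i then 0 else fps_nth g (k-i) * fps_nth h (l-i))"
    by (simp only: fps_X_power_mult_nth fps_mult_left_const_nth)
  also have "\<dots> = (\<Sum>p\<in>{0..min k l}. fps_nth g (k-p) * fps_nth h (l-p))"
    by (intro sum.mono_neutral_cong_right) auto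
  finally show ?thesis by (simp add: g_def h_def)
qed

lemma W_coeff:
  assumes N: "N \<ge> 1" and kl: "k \<le> M" "l \<le> M"
  shows "W_op M N $$ (k,l)
   = (\<Sum>p\<in>{0..min k l}. fps_nth ((1 - fps_X) * one_minus_pow_powr N (- 1 / real N)) (k-p)
        * fps_nth (one_minus_pow_powr N (1 / real N) * inverse (1 - fps_X)) (l-p))"
proof -
  define g where "g = (1 - fps_X) * one_minus_pow_powr N (- 1 / real N)"
  define h where "h = one_minus_pow_powr N (1 / real N) * inverse (1 - fps_X)"
  have W: "W_op M N = Lo (Suc M) g * Up (Suc M) h"
    unfolding W_op_def alpha_sum_pos alpha_sum_neg
    by (simp add: mat_exp_Up mat_exp_Lo aN0 E1[OF N] E2[OF N] g_def h_def)
  have "W_op M N $$ (k,l) = (\<Sum>p\<in>{0..<Suc M}. Lo (Suc M) g $$ (k,p) * Up (Suc M) h $$ (p,l))"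
    using kl by (simp add: W scalar_prod_def)
  also have "\<dots> = (\<Sum>p\<in>{0..<Suc M}. (if p \<le> k then fps_nth g (k-p) else 0) * (if p \<le> l then fps_nth h (l-p) else 0))"
    using kl by (intro sum.cong) (auto simp: Lo_idx Up_idx)
  also have "\<dots> = (\<Sum>p\<in>{0..min k l}. fps_nth g (k-p) * fps_nth h (l-p))"
    using kl by (intro sum.mono_neutral_cong_right) auto
  finally show ?thesis by (simp add: g_def h_def)
qed

theorem mainTheorem6:
  fixes N M k l :: nat
  assumes "N \<ge> 2" and "k \<le> M" and "l \<le> M"
  shows "W_op M N $$ (k, l) = fps_nth (fps_nth (f_gen N) k) l"
  using W_coeff[of N k M l] fgen_coeff[of N k l] assms by simp

end
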